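(* Let $N\ge1$ and $\eta_S,\eta_F,\eta_{FS}\in\mathbb{R}$, and let $(X_1,\dots,X_N)\in\{0,1\}^N$ have distribution $$\Pr(X_1=x_1,\dots,X_N=x_N)=\frac{1}{Z_1}\Big(e^{\eta_F\sum_ix_i}+e^{\eta_S+(\eta_{FS}+\eta_F)\sum_ix_i}\Big),\qquad Z_1=(1+e^{\eta_F})^N+e^{\eta_S}(1+e^{\eta_F+\eta_{FS}})^N$$ (the marginal law of the firm nodes in the graph with $N$ firm nodes of weight $\eta_F$, each joined by an edge of weight $\eta_{FS}$ to a single sector node of weight $\eta_S$). Then $$\sum_{i=1}^NX_i\ \stackrel{d}{=}\ YB_1+(1-Y)B_2,$$ where $Y,B_1,B_2$ are independent, $Y\sim\mathrm{Bernoulli}\big(e^{\eta_S}(1+e^{\eta_F}e^{\eta_{FS}})^N/Z_1\big)$, $B_1\sim\mathrm{Binomial}$ with $N$ trials and success probability $\frac{e^{\eta_F}e^{\eta_{FS}}}{1+e^{\eta_F}e^{\eta_{FS}}}$, and $B_2\sim\mathrm{Binomial}$ with $N$ trials and success probability $\frac{e^{\eta_F}}{1+e^{\eta_F}}$. *)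

theory Defs
  imports "HOL-Probability.Probability"
begin

definition Z1 :: "nat \<Rightarrow> real \<Rightarrow> real \<Rightarrow> real \<Rightarrow> real" where
  "Z1 N eS eF eFS = (1 + exp eF) ^ N + exp eS * (1 + exp (eF + eFS)) ^ N"

end

theory Submission
  imports Defs
begin

definition cnt :: "bool list \<Rightarrow> nat" where "cnt xs = (\<Sum>x\<leftarrow>xs. of_bool x)"

lemma cnt_simps[simp]: "cnt [] = 0" "cnt (x#xs) = of_bool x + cnt xs"
  by (simp_all add: cnt_def)

lemma finite_S: "finite {xs::bool list. length xs = n \<and> cnt xs = k}"
  by (rule finite_subset[OF _ finite_lists_length_eq[of "UNIV::bool set" n]]) auto

lemma card_S: "card {xs::bool list. length xs = n \<and> cnt xs = k} = n choose k"
proof (induction n arbitrary: k)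
  case 0
  have "{xs::bool list. length xs = 0 \<and> cnt xs = k} = (if k = 0 then {[]} else {})" by auto
  then show ?case by simp
next
  case (Suc n)
  have eq: "{xs::bool list. length xs = Suc n \<and> cnt xs = k} =
      Cons False ` {xs. length xs = n \<and> cnt xs = k} \<union>
      Cons True ` {xs. length xs = n \<and> Suc (cnt xs) = k}"
    by (auto simp: length_Suc_conv image_iff)
  have d: "Cons False ` {xs. length xs = n \<and> cnt xs = k} \<inter>
      Cons True ` {xs. length xs = n \<and> Suc (cnt xs) = k} = {}" by auto
  have f2: "finite {xs::bool list. length xs = n \<and> Suc (cnt xs) = k}"
    by (rule finite_subset[OF _ finite_lists_length_eq[of "UNIV::bool set" n]]) auto
  have c2: "card {xs::bool list. length xs = n \<and> Suc (cnt xs) = k} = (if k = 0 then 0 else n choose (k - 1))"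
  proof (cases k)
    case 0 then show ?thesis by simp
  next
    case (Suc j) then show ?thesis using Suc.IH[of j] by simp
  qed
  have "card {xs::bool list. length xs = Suc n \<and> cnt xs = k} =
     card {xs::bool list. length xs = n \<and> cnt xs = k} + card {xs::bool list. length xs = n \<and> Suc (cnt xs) = k}"
    unfolding eq
    by (subst card_Un_disjoint) (use d finite_S f2 in \<open>auto simp: card_image\<close>)
  then show ?case using Suc.IH[of k] c2 by (cases k) auto
qed

lemma alg: "(A::real) > 0 \<Longrightarrow> B > 0 \<Longrightarrow>
   E * A / Z * (C * (x / A)) + B / Z * (C * (y / B)) = C * ((y + E * x) / Z)"
  by (simp add: field_simps add_divide_distrib)

theorem proposition2:
  fixes N :: nat and eS eF eFS :: real and P :: "bool list pmf"
  assumes "N \<ge> 1"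
  assumes P: "\<And>xs. pmf P xs =
     (if length xs = N then
        (exp (eF * (\<Sum>x\<leftarrow>xs. of_bool x))
         + exp (eS + (eFS + eF) * (\<Sum>x\<leftarrow>xs. of_bool x))) / Z1 N eS eF eFS
      else 0)"
  shows "map_pmf (\<lambda>xs. \<Sum>x\<leftarrow>xs. (of_bool x :: nat)) P =
    do { y \<leftarrow> bernoulli_pmf (exp eS * (1 + exp eF * exp eFS) ^ N / Z1 N eS eF eFS);
         b1 \<leftarrow> binomial_pmf N (exp eF * exp eFS / (1 + exp eF * exp eFS));
         b2 \<leftarrow> binomial_pmf N (exp eF / (1 + exp eF));
         return_pmf (of_bool y * b1 + (1 - of_bool y) * b2) }"
proof (rule pmf_eqI)
  fix k :: nat
  define Z where "Z = Z1 N eS eF eFS"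
  define a where "a = exp eF * exp eFS"
  define b where "b = exp eF"
  have a0: "a > 0" and b0: "b > 0" by (simp_all add: a_def b_def)
  have Z: "Z = (1 + b) ^ N + exp eS * (1 + a) ^ N"
    by (simp add: Z_def Z1_def a_def b_def exp_add)
  have Z0: "Z > 0" unfolding Z using a0 b0 by (intro add_pos_pos) auto
  define p where "p = exp eS * (1 + a) ^ N / Z"
  have p01: "0 \<le> p" "p \<le> 1" using Z0 a0 b0 by (auto simp: p_def Z field_simps)
  have q1: "0 \<le> a / (1 + a)" "a / (1 + a) \<le> 1" using a0 by auto
  have q2: "0 \<le> b / (1 + b)" "b / (1 + b) \<le> 1" using b0 by auto
  let ?S = "{xs::bool list. length xs = N \<and> cnt xs = k}"
  have Px: "pmf P xs = (if length xs = N then (b ^ cnt xs + exp eS * a ^ cnt xs) / Z else 0)" for xs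
  proof -
    have r: "(\<Sum>x\<leftarrow>xs. of_bool x :: real) = real (cnt xs)"
      by (induction xs) auto
    show ?thesis unfolding P r
      by (simp add: Z_def a_def b_def exp_add exp_of_nat_mult [symmetric] mult.commute
           power_mult_distrib distrib_left distrib_right)
  qed
  have L: "pmf (map_pmf cnt P) k = real (N choose k) * ((b ^ k + exp eS * a ^ k) / Z)"
  proof -
    have "pmf (map_pmf cnt P) k = measure P (cnt -` {k})" by (rule pmf_map)
    also have "\<dots> = measure P ?S"
    proof (rule measure_pmf.finite_measure_eq_AE)
      show "AE x in measure_pmf P. (x \<in> cnt -` {k}) = (x \<in> ?S)"
        by (rule AE_pmfI) (auto simp: set_pmf_iff Px split: if_splits)
    qed auto
    also have "\<dots> = (\<Sum>xs\<in>?S. (b ^ k + exp eS * a ^ k) / Z)"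
      by (subst measure_measure_pmf_finite[OF finite_S]) (auto intro!: sum.cong simp: Px)
    also have "\<dots> = real (N choose k) * ((b ^ k + exp eS * a ^ k) / Z)"
      by (simp add: card_S)
    finally show ?thesis .
  qed
  have R: "do { y \<leftarrow> bernoulli_pmf p;
         b1 \<leftarrow> binomial_pmf N (a / (1 + a));
         b2 \<leftarrow> binomial_pmf N (b / (1 + b));
         return_pmf (of_bool y * b1 + (1 - of_bool y) * b2) } =
     bernoulli_pmf p \<bind> (\<lambda>y. if y then binomial_pmf N (a / (1 + a)) else binomial_pmf N (b / (1 + b)))"
    by (intro bind_pmf_cong) (auto simp: bind_return_pmf')
  have R2: "pmf (bernoulli_pmf p \<bind> (\<lambda>y. if y then binomial_pmf N (a / (1 + a)) else binomial_pmf N (b / (1 + b)))) k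
     = real (N choose k) * ((b ^ k + exp eS * a ^ k) / Z)"
  proof (cases "k \<le> N")
    case True
    have e1: "(1 - a / (1 + a)) = 1 / (1 + a)" "(1 - b / (1 + b)) = 1 / (1 + b)"
      using a0 b0 by (auto simp: field_simps)
    have pm: "1 - p = (1 + b) ^ N / Z" using Z0 by (simp add: p_def Z field_simps)
    have bin: "(c / (1 + c)) ^ k * (1 / (1 + c)) ^ (N - k) = c ^ k / (1 + c) ^ N" if "c > 0" for c :: real
    proof -
      have "(c / (1 + c)) ^ k * (1 / (1 + c)) ^ (N - k) = c ^ k / ((1 + c) ^ k * (1 + c) ^ (N - k))"
        by (simp add: power_divide)
      also have "(1 + c) ^ k * (1 + c) ^ (N - k) = (1 + c) ^ N"
        using True by (simp add: power_add[symmetric])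
      finally show ?thesis .
    qed
    have "pmf (bernoulli_pmf p \<bind> (\<lambda>y. if y then binomial_pmf N (a / (1 + a)) else binomial_pmf N (b / (1 + b)))) k
      = p * (real (N choose k) * (a / (1 + a)) ^ k * (1 / (1 + a)) ^ (N - k))
        + (1 - p) * (real (N choose k) * (b / (1 + b)) ^ k * (1 / (1 + b)) ^ (N - k))"
      using p01 q1 q2 by (simp add: pmf_bind e1)
    also have "\<dots> = p * (real (N choose k) * (a ^ k / (1 + a) ^ N))
        + (1 - p) * (real (N choose k) * (b ^ k / (1 + b) ^ N))"
      using bin[OF a0] bin[OF b0] by (simp add: mult.assoc)
    also have "\<dots> = real (N choose k) * ((b ^ k + exp eS * a ^ k) / Z)"
      proof -
      have A: "(1 + a) ^ N > 0" "(1 + b) ^ N > 0" using a0 b0 by auto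
      show ?thesis unfolding pm unfolding p_def by (rule alg[OF A])
    qed
    finally show ?thesis .
  next
    case False
    then show ?thesis using p01 q1 q2 by (simp add: pmf_bind binomial_eq_0)
  qed
  show "pmf (map_pmf (\<lambda>xs. \<Sum>x\<leftarrow>xs. (of_bool x :: nat)) P) k = pmf (do { y \<leftarrow> bernoulli_pmf (exp eS * (1 + exp eF * exp eFS) ^ N / Z1 N eS eF eFS);
         b1 \<leftarrow> binomial_pmf N (exp eF * exp eFS / (1 + exp eF * exp eFS));
         b2 \<leftarrow> binomial_pmf N (exp eF / (1 + exp eF));
         return_pmf (of_bool y * b1 + (1 - of_bool y) * b2) }) k"
    using L R R2 unfolding cnt_def[abs_def] p_def a_def b_def Z_def by simp
qed

end
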